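(* Let $t_1,\dots,t_d$ be positive integers with $t_i\le n_i$ for all $i$ and $t_1=t_2t_3\cdots t_d$. Then $G$ acts transitively on the set $\Lambda_{t_1\dots t_d}=\mathrm{mrank}^{-1}(t_1,\dots,t_d)$ of tensors in $V$ of multilinear rank $(t_1,\dots,t_d)$; in particular $\Lambda_{t_1\dots t_d}=G\cdot T$ with $$T=\sum_{\beta_2=1}^{t_2}\cdots\sum_{\beta_d=1}^{t_d} e_1^{\iota(\beta_2,\dots,\beta_d)}\otimes e_2^{\beta_2}\otimes\cdots\otimes e_d^{\beta_d}.$$
   Context: Fix integers $d\ge 3$ and $n_1,\dots,n_d\ge 2$. $V=\mathbb{R}^{n_1}\otimes\cdots\otimes\mathbb{R}^{n_d}$, and $G=\mathrm{GL}(n_1)\times\cdots\times\mathrm{GL}(n_d)$ acts on $V$ by $(g_1,\dots,g_d)\cdot(v_1\otimes\cdots\otimes v_d)=(g_1v_1)\otimes\cdots\otimes(g_dv_d)$, extended linearly. $e_i^1,\dots,e_i^{n_i}$ is the standard basis of $\mathbb{R}^{n_i}$. The multilinear rank of $T\in V$ is $(t_1,\dots,t_d)$ where $t_i$ is the rank of $T$ viewed as a linear map $\mathbb{R}^{n_i}\to\bigotimes_{j\ne i}\mathbb{R}^{n_j}$. $\iota:[t_2]\times\cdots\times[t_d]\to[t_1]$ is the lexicographic bijection with $\beta_2$ most significant (the ordering for which the Kronecker product satisfies $(A_2\otimes\cdots\otimes A_d)_{\iota(\beta),\iota(\gamma)}=\prod_{i}(A_i)_{\beta_i\gamma_i}$).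 *)

theory Defs
  imports Complex_Main "HOL-Library.Function_Algebras"
begin

text \<open>The d tensor factors are indexed by i in {0..<d} (factor i here is
factor i+1 of the paper). Basis indices are 0-based: e_i^a with a < n i.\<close>

type_synonym tensor = "(nat \<Rightarrow> nat) \<Rightarrow> real"

definition idx :: "nat \<Rightarrow> (nat \<Rightarrow> nat) \<Rightarrow> (nat \<Rightarrow> nat) set" where
  "idx d n = {k. (\<forall>i<d. k i < n i) \<and> (\<forall>i\<ge>d. k i = 0)}"

definition tensors :: "nat \<Rightarrow> (nat \<Rightarrow> nat) \<Rightarrow> tensor set" where
  "tensors d n = {T. \<forall>k. k \<notin> idx d n \<longrightarrow> T k = 0}"

text \<open>Invertible m x m real matrices, given as functions nat => nat => real (entries
outside the range are irrelevant).\<close>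
definition invertible_mat :: "nat \<Rightarrow> (nat \<Rightarrow> nat \<Rightarrow> real) \<Rightarrow> bool" where
  "invertible_mat m A \<longleftrightarrow> (\<exists>B. (\<forall>a<m. \<forall>b<m. (\<Sum>c<m. A a c * B c b) = (if a = b then 1 else 0))
                              \<and> (\<forall>a<m. \<forall>b<m. (\<Sum>c<m. B a c * A c b) = (if a = b then 1 else 0)))"

definition GL_prod :: "nat \<Rightarrow> (nat \<Rightarrow> nat) \<Rightarrow> (nat \<Rightarrow> nat \<Rightarrow> nat \<Rightarrow> real) set" where
  "GL_prod d n = {g. \<forall>i<d. invertible_mat (n i) (g i)}"

definition act :: "nat \<Rightarrow> (nat \<Rightarrow> nat) \<Rightarrow> (nat \<Rightarrow> nat \<Rightarrow> nat \<Rightarrow> real) \<Rightarrow> tensor \<Rightarrow> tensor" where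
  "act d n g T = (\<lambda>k. if k \<in> idx d n
      then (\<Sum>l\<in>idx d n. (\<Prod>i<d. g i (k i) (l i)) * T l) else 0)"

text \<open>The flattening of T along mode i, as a linear map from R^{n_i} (vectors x with
x a = 0 for a >= n i) to the tensor product of the other factors (tensors with k i = 0).\<close>
definition flatten :: "nat \<Rightarrow> (nat \<Rightarrow> nat) \<Rightarrow> tensor \<Rightarrow> nat \<Rightarrow> (nat \<Rightarrow> real) \<Rightarrow> tensor" where
  "flatten d n T i x = (\<lambda>k. if k i = 0 then (\<Sum>a<n i. x a * T (k(i := a))) else 0)"

definition rscale :: "real \<Rightarrow> tensor \<Rightarrow> tensor" where
  "rscale c f = (\<lambda>k. c * f k)"

definition mrank :: "nat \<Rightarrow> (nat \<Rightarrow> nat) \<Rightarrow> tensor \<Rightarrow> nat \<Rightarrow> nat" where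
  "mrank d n T i = vector_space.dim rscale (flatten d n T i ` {x. \<forall>a\<ge>n i. x a = 0})"

definition Lambda :: "nat \<Rightarrow> (nat \<Rightarrow> nat) \<Rightarrow> (nat \<Rightarrow> nat) \<Rightarrow> tensor set" where
  "Lambda d n t = {S \<in> tensors d n. \<forall>i<d. mrank d n S i = t i}"

text \<open>Lexicographic bijection iota (0-based), factor 1 (paper's beta_2) most significant.\<close>
definition iota :: "nat \<Rightarrow> (nat \<Rightarrow> nat) \<Rightarrow> (nat \<Rightarrow> nat) \<Rightarrow> nat" where
  "iota d t k = (\<Sum>i\<in>{1..<d}. k i * (\<Prod>j\<in>{i<..<d}. t j))"

definition normal_tensor :: "nat \<Rightarrow> (nat \<Rightarrow> nat) \<Rightarrow> (nat \<Rightarrow> nat) \<Rightarrow> tensor" where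
  "normal_tensor d n t = (\<lambda>k. if k \<in> idx d n \<and> (\<forall>i\<in>{1..<d}. k i < t i) \<and> k 0 = iota d t k
                               then 1 else 0)"

end

theory Submission
  imports Defs "Jordan_Normal_Form.Determinant" "HOL-Library.FuncSet"
begin


lemma sum_fun_apply: "(sum F A) k = (\<Sum>a\<in>A. F a k)"
  by (induct A rule: infinite_finite_induct) auto

lemma rscale_apply[simp]: "rscale c f k = c * f k"
  by (simp add: rscale_def)

interpretation TV: vector_space rscale
  by unfold_locales (auto simp: rscale_def fun_eq_iff algebra_simps)

lemma inv_crit:
  fixes g :: "nat \<Rightarrow> nat \<Rightarrow> real"
  assumes H: "\<And>x. (\<forall>b<m. (\<Sum>a<m. x a * g a b) = 0) \<Longrightarrow> (\<forall>a<m. x a = 0)"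
  shows "Defs.invertible_mat m g"
proof -
  define A where "A = mat m m (\<lambda>(i,j). g i j)"
  have A: "A \<in> carrier_mat m m" by (simp add: A_def)
  have "det (transpose_mat A) \<noteq> 0"
  proof
    assume "det (transpose_mat A) = 0"
    then obtain v where v: "v \<in> carrier_vec m" "v \<noteq> 0\<^sub>v m" "transpose_mat A *\<^sub>v v = 0\<^sub>v m"
      using det_0_iff_vec_prod_zero[of "transpose_mat A" m] A by auto
    have "\<forall>b<m. (\<Sum>a<m. v $ a * g a b) = 0"
    proof (intro allI impI)
      fix b assume b: "b < m"
      have "(transpose_mat A *\<^sub>v v) $ b = 0" using v(3) b by simp
      then show "(\<Sum>a<m. v $ a * g a b) = 0"
        using b v(1) by (simp add: A_def mult_mat_vec_def scalar_prod_def lessThan_atLeast0 mult.commute)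
    qed
    then have "\<forall>a<m. v $ a = 0" using H by blast
    then have "v = 0\<^sub>v m" using v(1) by (intro eq_vecI) auto
    then show False using v(2) by simp
  qed
  then have "det A \<noteq> 0" using det_transpose[OF A] by simp
  from det_non_zero_imp_unit[OF A this, of undefined]
  obtain B where B: "B \<in> carrier_mat m m" "B * A = 1\<^sub>m m" "A * B = 1\<^sub>m m"
    unfolding Units_def by (auto simp: ring_mat_def)
  show ?thesis unfolding Defs.invertible_mat_def
  proof (intro exI[of _ "\<lambda>i j. B $$ (i,j)"] conjI allI impI)
    fix a b assume ab: "a < m" "b < m"
    have "(A * B) $$ (a,b) = (if a = b then 1 else 0)" using B(3) ab by simp
    then show "(\<Sum>c<m. g a c * B $$ (c, b)) = (if a = b then 1 else 0)"
      using ab B(1) by (simp add: A_def scalar_prod_def lessThan_atLeast0)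
  next
    fix a b assume ab: "a < m" "b < m"
    have "(B * A) $$ (a,b) = (if a = b then 1 else 0)" using B(2) ab by simp
    then show "(\<Sum>c<m. B $$ (a, c) * g c b) = (if a = b then 1 else 0)"
      using ab B(1) by (simp add: A_def scalar_prod_def lessThan_atLeast0)
  qed
qed




lemma idx_Suc_bij:
  "bij_betw (\<lambda>(l,b). l(d:=b)) (idx d n \<times> {..<n d}) (idx (Suc d) n)"
proof (rule bij_betwI[where g = "\<lambda>k. (k(d:=0), k d)"])
qed (auto simp: idx_def less_Suc_eq fun_eq_iff)

lemma idx_0: "idx 0 n = {\<lambda>i. 0}" by (auto simp: idx_def fun_eq_iff)

lemma finite_idx: "finite (idx d n)"
proof (induct d)
  case 0
  then show ?case by (simp add: idx_0)
next
  case (Suc d)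
  then show ?case using bij_betw_finite[OF idx_Suc_bij[of d n]] by simp
qed

lemma card_idx: "card (idx d n) = (\<Prod>i<d. n i)"
proof (induct d)
  case 0
  then show ?case by (simp add: idx_0)
next
  case (Suc d)
  then show ?case using bij_betw_same_card[OF idx_Suc_bij[of d n]] by (simp add: card_cartesian_product)
qed

lemma sum_prod_idx:
  "(\<Sum>l\<in>idx d n. \<Prod>i<d. f i (l i)) = (\<Prod>i<d. \<Sum>b<n i. f i b :: 'a::comm_semiring_1)"
proof (induct d)
  case 0
  have "idx 0 n = {\<lambda>i. 0}" by (auto simp: idx_def fun_eq_iff)
  then show ?case by simp
next
  case (Suc d)
  have "(\<Sum>k\<in>idx (Suc d) n. \<Prod>i<Suc d. f i (k i))
      = (\<Sum>(l,b)\<in>idx d n \<times> {..<n d}. \<Prod>i<Suc d. f i ((l(d:=b)) i))"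
    using sum.reindex_bij_betw[OF idx_Suc_bij, of "\<lambda>k. \<Prod>i<Suc d. f i (k i)" d n]
    by (simp add: case_prod_unfold)
  also have "\<dots> = (\<Sum>(l,b)\<in>idx d n \<times> {..<n d}. (\<Prod>i<d. f i (l i)) * f d b)"
    by (intro sum.cong refl) (auto intro!: prod.cong)
  also have "\<dots> = (\<Sum>l\<in>idx d n. \<Sum>b<n d. (\<Prod>i<d. f i (l i)) * f d b)"
    by (rule sum.cartesian_product[symmetric])
  also have "\<dots> = (\<Sum>l\<in>idx d n. (\<Prod>i<d. f i (l i)) * (\<Sum>b<n d. f d b))"
    by (simp add: sum_distrib_left)
  also have "\<dots> = (\<Sum>l\<in>idx d n. \<Prod>i<d. f i (l i)) * (\<Sum>b<n d. f d b)"
    by (simp add: sum_distrib_right)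
  finally show ?case using Suc by simp
qed

lemma idx_split_bij:
  assumes j: "j < d"
  shows "bij_betw (\<lambda>(l,b). l(j:=b)) ({l\<in>idx d n. l j = 0} \<times> {..<n j}) (idx d n)"
  apply (rule bij_betwI[where g = "\<lambda>k. (k(j:=0), k j)"])
  using j apply (auto simp: idx_def fun_eq_iff)
  by (metis gr0I less_nat_zero_code)

lemma sum_idx_split:
  assumes j: "j < d"
  shows "(\<Sum>l\<in>idx d n. F l) = (\<Sum>b<n j. \<Sum>l\<in>{l\<in>idx d n. l j = 0}. F (l(j:=b)))"
proof -
  have "(\<Sum>l\<in>idx d n. F l) = (\<Sum>(l,b)\<in>{l\<in>idx d n. l j = 0} \<times> {..<n j}. F (l(j:=b)))"
    using sum.reindex_bij_betw[OF idx_split_bij[OF j], of F n] by (simp add: case_prod_unfold)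
  also have "\<dots> = (\<Sum>l\<in>{l\<in>idx d n. l j = 0}. \<Sum>b<n j. F (l(j:=b)))"
    by (simp add: sum.cartesian_product)
  also have "\<dots> = (\<Sum>b<n j. \<Sum>l\<in>{l\<in>idx d n. l j = 0}. F (l(j:=b)))"
    by (rule sum.swap)
  finally show ?thesis .
qed




definition idm :: "nat \<Rightarrow> nat \<Rightarrow> real" where "idm a b = (if a = b then 1 else 0)"
definition mmul :: "nat \<Rightarrow> (nat \<Rightarrow> nat \<Rightarrow> real) \<Rightarrow> (nat \<Rightarrow> nat \<Rightarrow> real) \<Rightarrow> nat \<Rightarrow> nat \<Rightarrow> real" where
  "mmul m A B = (\<lambda>a c. \<Sum>b<m. A a b * B b c)"
definition slice :: "tensor \<Rightarrow> nat \<Rightarrow> nat \<Rightarrow> tensor" where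
  "slice S j a = (\<lambda>k. if k j = 0 then S (k(j:=a)) else 0)"

lemma rscale_one[simp]: "rscale 1 f = f" by (simp add: rscale_def)
lemma rscale_zero[simp]: "rscale 0 f = 0" by (simp add: rscale_def fun_eq_iff)

lemma act_tensors: "act d n g S \<in> tensors d n"
  by (simp add: act_def tensors_def)

lemma act_cong:
  assumes "\<forall>i<d. \<forall>a<n i. \<forall>c<n i. g i a c = g' i a c"
  shows "act d n g S = act d n g' S"
  unfolding act_def using assms by (auto simp: fun_eq_iff idx_def intro!: sum.cong prod.cong)

lemma prod_idm: "(\<Prod>i\<in>A. idm (k i) (l i)) = (if \<forall>i\<in>A. k i = l i then 1 else 0)" if "finite A"
proof (cases "\<forall>i\<in>A. k i = l i")
  case True then show ?thesis by (simp add: idm_def)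
next
  case False
  then obtain i where "i \<in> A" "k i \<noteq> l i" by auto
  then show ?thesis using that by (auto simp: prod_zero_iff idm_def)
qed

lemma idx_eq: "k \<in> idx d n \<Longrightarrow> l \<in> idx d n \<Longrightarrow> (\<forall>i<d. k i = l i) \<longleftrightarrow> k = l"
  by (auto simp: idx_def fun_eq_iff) (metis not_less)

lemma act_id: assumes "S \<in> tensors d n" shows "act d n (\<lambda>i. idm) S = S"
proof
  fix k
  show "act d n (\<lambda>i. idm) S k = S k"
  proof (cases "k \<in> idx d n")
    case True
    have "(\<Sum>l\<in>idx d n. (\<Prod>i<d. idm (k i) (l i)) * S l) = (\<Sum>l\<in>idx d n. if k = l then S l else 0)"
      by (intro sum.cong refl) (use idx_eq[OF True] in \<open>auto simp: prod_idm\<close>)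
    also have "\<dots> = S k" using True finite_idx by simp
    finally show ?thesis using True by (simp add: act_def)
  next
    case False then show ?thesis using assms by (simp add: act_def tensors_def)
  qed
qed

lemma act_comp:
  assumes "S \<in> tensors d n"
  shows "act d n g (act d n h S) = act d n (\<lambda>i. mmul (n i) (g i) (h i)) S"
proof
  fix k
  show "act d n g (act d n h S) k = act d n (\<lambda>i. mmul (n i) (g i) (h i)) S k"
  proof (cases "k \<in> idx d n")
    case True
    have "act d n g (act d n h S) k = (\<Sum>l\<in>idx d n. (\<Prod>i<d. g i (k i) (l i)) * (\<Sum>p\<in>idx d n. (\<Prod>i<d. h i (l i) (p i)) * S p))"
      using True by (auto simp: act_def intro!: sum.cong)
    also have "\<dots> = (\<Sum>l\<in>idx d n. \<Sum>p\<in>idx d n. (\<Prod>i<d. g i (k i) (l i)) * (\<Prod>i<d. h i (l i) (p i)) * S p)"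
      by (simp add: sum_distrib_left mult.assoc)
    also have "\<dots> = (\<Sum>p\<in>idx d n. \<Sum>l\<in>idx d n. (\<Prod>i<d. g i (k i) (l i) * h i (l i) (p i)) * S p)"
      by (subst sum.swap) (simp add: prod.distrib)
    also have "\<dots> = (\<Sum>p\<in>idx d n. (\<Sum>l\<in>idx d n. \<Prod>i<d. g i (k i) (l i) * h i (l i) (p i)) * S p)"
      by (simp add: sum_distrib_right)
    also have "\<dots> = (\<Sum>p\<in>idx d n. (\<Prod>i<d. mmul (n i) (g i) (h i) (k i) (p i)) * S p)"
      by (subst sum_prod_idx[of "\<lambda>i b. g i (k i) b * h i b (_ i)"]) (simp add: mmul_def)
    finally show ?thesis using True by (simp add: act_def)
  next
    case False then show ?thesis by (simp add: act_def)
  qed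
qed

lemma inv_rows:
  assumes A: "Defs.invertible_mat m A" and x: "\<forall>b<m. (\<Sum>a<m. x a * A a b) = 0"
  shows "\<forall>a<m. x a = 0"
proof -
  obtain B where B: "\<forall>a<m. \<forall>b<m. (\<Sum>c<m. A a c * B c b) = (if a = b then 1 else 0)"
    using A unfolding Defs.invertible_mat_def by blast
  show ?thesis
  proof (intro allI impI)
    fix c assume c: "c < m"
    have "x c = (\<Sum>a<m. x a * (if a = c then 1 else 0))" using c by (simp add: if_distrib cong: if_cong)
    also have "\<dots> = (\<Sum>a<m. x a * (\<Sum>b<m. A a b * B b c))" using B c by simp
    also have "\<dots> = (\<Sum>b<m. (\<Sum>a<m. x a * A a b) * B b c)"
      by (simp add: sum_distrib_left sum_distrib_right mult.assoc) (rule sum.swap)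
    also have "\<dots> = 0" using x by simp
    finally show "x c = 0" .
  qed
qed

lemma invertible_mmul:
  assumes "Defs.invertible_mat m A" "Defs.invertible_mat m B"
  shows "Defs.invertible_mat m (mmul m A B)"
proof (rule inv_crit)
  fix x assume H: "\<forall>b<m. (\<Sum>a<m. x a * mmul m A B a b) = 0"
  define y where "y b = (\<Sum>a<m. x a * A a b)" for b
  have "\<forall>c<m. (\<Sum>b<m. y b * B b c) = 0"
  proof (intro allI impI)
    fix c assume "c < m"
    have "(\<Sum>b<m. y b * B b c) = (\<Sum>a<m. x a * mmul m A B a c)"
      unfolding y_def mmul_def by (simp add: sum_distrib_left sum_distrib_right mult.assoc) (rule sum.swap)
    then show "(\<Sum>b<m. y b * B b c) = 0" using H \<open>c < m\<close> by simp
  qed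
  then have "\<forall>b<m. y b = 0" using inv_rows[OF assms(2)] by blast
  then show "\<forall>a<m. x a = 0" using inv_rows[OF assms(1)] unfolding y_def by blast
qed

lemma sum_idm_left: "(\<Sum>c<m. idm a c * f c) = (if a < m then f a else 0)"
proof -
  have "(\<Sum>c<m. idm a c * f c) = (\<Sum>c<m. if a = c then f c else 0)" by (intro sum.cong) (auto simp: idm_def)
  then show ?thesis by simp
qed

lemma sum_idm_right: "(\<Sum>c<m. f c * idm c b) = (if b < m then f b else 0)"
proof -
  have "(\<Sum>c<m. f c * idm c b) = (\<Sum>c<m. if c = b then f c else 0)" by (intro sum.cong) (auto simp: idm_def)
  then show ?thesis by simp
qed

lemma invertible_idm: "Defs.invertible_mat m idm"
  unfolding Defs.invertible_mat_def by (intro exI[of _ idm]) (simp add: sum_idm_left, simp add: idm_def)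

lemma invertible_inv:
  assumes "Defs.invertible_mat m A"
  shows "\<exists>B. Defs.invertible_mat m B \<and> (\<forall>a<m. \<forall>c<m. mmul m B A a c = idm a c)"
proof -
  obtain B where B: "\<forall>a<m. \<forall>b<m. (\<Sum>c<m. A a c * B c b) = (if a = b then 1 else 0)"
    "\<forall>a<m. \<forall>b<m. (\<Sum>c<m. B a c * A c b) = (if a = b then 1 else 0)"
    using assms unfolding Defs.invertible_mat_def by blast
  then have "Defs.invertible_mat m B" unfolding Defs.invertible_mat_def by blast
  then show ?thesis using B by (auto simp: mmul_def idm_def)
qed

lemma GL_idm: "(\<lambda>i. idm) \<in> GL_prod d n"
  by (simp add: GL_prod_def invertible_idm)

lemma GL_mul: "g \<in> GL_prod d n \<Longrightarrow> h \<in> GL_prod d n \<Longrightarrow> (\<lambda>i. mmul (n i) (g i) (h i)) \<in> GL_prod d n"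
  by (simp add: GL_prod_def invertible_mmul)

lemma GL_inv:
  assumes "g \<in> GL_prod d n"
  shows "\<exists>h\<in>GL_prod d n. \<forall>S\<in>tensors d n. act d n h (act d n g S) = S"
proof -
  have "\<forall>i<d. \<exists>B. Defs.invertible_mat (n i) B \<and> (\<forall>a<n i. \<forall>c<n i. mmul (n i) B (g i) a c = idm a c)"
    using assms invertible_inv by (auto simp: GL_prod_def)
  then obtain h where h: "\<forall>i<d. Defs.invertible_mat (n i) (h i) \<and> (\<forall>a<n i. \<forall>c<n i. mmul (n i) (h i) (g i) a c = idm a c)"
    by metis
  have "act d n h (act d n g S) = S" if "S \<in> tensors d n" for S
  proof -
    have "act d n h (act d n g S) = act d n (\<lambda>i. mmul (n i) (h i) (g i)) S" by (rule act_comp[OF that])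
    also have "\<dots> = act d n (\<lambda>i. idm) S" by (rule act_cong) (use h in auto)
    also have "\<dots> = S" by (rule act_id[OF that])
    finally show ?thesis .
  qed
  moreover have "h \<in> GL_prod d n" using h by (simp add: GL_prod_def)
  ultimately show ?thesis by blast
qed

lemma act_K:
  assumes j: "j < d" and k: "k \<in> idx d n"
  shows "act d n g S k = (\<Sum>l\<in>{l\<in>idx d n. l j = 0}. (\<Prod>i\<in>{..<d}-{j}. g i (k i) (l i)) * (\<Sum>b<n j. g j (k j) b * S (l(j:=b))))"
proof -
  have "act d n g S k = (\<Sum>l\<in>idx d n. (\<Prod>i<d. g i (k i) (l i)) * S l)" using k by (simp add: act_def)
  also have "\<dots> = (\<Sum>b<n j. \<Sum>l\<in>{l\<in>idx d n. l j = 0}. (\<Prod>i<d. g i (k i) ((l(j:=b)) i)) * S (l(j:=b)))"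
    by (rule sum_idx_split[OF j])
  also have "\<dots> = (\<Sum>b<n j. \<Sum>l\<in>{l\<in>idx d n. l j = 0}. (\<Prod>i\<in>{..<d}-{j}. g i (k i) (l i)) * (g j (k j) b * S (l(j:=b))))"
  proof (intro sum.cong refl)
    fix b l
    have "(\<Prod>i<d. g i (k i) ((l(j:=b)) i)) = g j (k j) b * (\<Prod>i\<in>{..<d}-{j}. g i (k i) ((l(j:=b)) i))"
      using j by (subst prod.remove[of _ j]) auto
    also have "(\<Prod>i\<in>{..<d}-{j}. g i (k i) ((l(j:=b)) i)) = (\<Prod>i\<in>{..<d}-{j}. g i (k i) (l i))"
      by (intro prod.cong) auto
    finally show "(\<Prod>i<d. g i (k i) ((l(j:=b)) i)) * S (l(j:=b)) = (\<Prod>i\<in>{..<d}-{j}. g i (k i) (l i)) * (g j (k j) b * S (l(j:=b)))"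
      by simp
  qed
  also have "\<dots> = (\<Sum>l\<in>{l\<in>idx d n. l j = 0}. (\<Prod>i\<in>{..<d}-{j}. g i (k i) (l i)) * (\<Sum>b<n j. g j (k j) b * S (l(j:=b))))"
    by (subst sum.swap) (simp add: sum_distrib_left)
  finally show ?thesis .
qed

lemma flatten_eq: "flatten d n S j x = (\<Sum>a<n j. rscale (x a) (slice S j a))"
  by (auto simp: fun_eq_iff flatten_def slice_def sum_fun_apply)

lemma range_lincomb:
  "(\<lambda>x. \<Sum>a<m. rscale (x a) (v a)) ` {x. \<forall>a\<ge>m. x a = 0} = TV.span (v ` {..<(m::nat)})"
proof
  show "(\<lambda>x. \<Sum>a<m. rscale (x a) (v a)) ` {x. \<forall>a\<ge>m. x a = 0} \<subseteq> TV.span (v ` {..<m})"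
  proof
    fix f assume "f \<in> (\<lambda>x. \<Sum>a<m. rscale (x a) (v a)) ` {x. \<forall>a\<ge>m. x a = 0}"
    then obtain x where "f = (\<Sum>a<m. rscale (x a) (v a))" by auto
    moreover have "(\<Sum>a<m. rscale (x a) (v a)) \<in> TV.span (v ` {..<m})"
      by (intro TV.span_sum TV.span_scale TV.span_base) auto
    ultimately show "f \<in> TV.span (v ` {..<m})" by simp
  qed
  let ?R = "(\<lambda>x. \<Sum>a<m. rscale (x a) (v a)) ` {x. \<forall>a\<ge>m. x a = 0}"
  have sub: "TV.subspace ?R"
    unfolding TV.subspace_def
  proof (intro conjI ballI allI)
    show "0 \<in> ?R" by (rule image_eqI[of _ _ "\<lambda>a. 0"]) auto
  next
    fix f g assume "f \<in> ?R" "g \<in> ?R"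
    then obtain x y where xy: "\<forall>a\<ge>m. x a = 0" "\<forall>a\<ge>m. y a = 0"
      "f = (\<Sum>a<m. rscale (x a) (v a))" "g = (\<Sum>a<m. rscale (y a) (v a))" by auto
    show "f + g \<in> ?R"
      by (rule image_eqI[of _ _ "\<lambda>a. x a + y a"]) (use xy in \<open>auto simp: TV.scale_left_distrib sum.distrib\<close>)
  next
    fix c f assume "f \<in> ?R"
    then obtain x where x: "\<forall>a\<ge>m. x a = 0" "f = (\<Sum>a<m. rscale (x a) (v a))" by auto
    show "rscale c f \<in> ?R"
      by (rule image_eqI[of _ _ "\<lambda>a. c * x a"]) (use x in \<open>auto simp: TV.scale_sum_right\<close>)
  qed
  have "v ` {..<m} \<subseteq> ?R"
  proof
    fix f assume "f \<in> v ` {..<m}"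
    then obtain a where a: "a < m" "f = v a" by auto
    have "(\<Sum>b<m. rscale (if b = a then 1 else 0) (v b)) = (\<Sum>b<m. if b = a then v b else 0)"
      by (intro sum.cong) auto
    also have "\<dots> = v a" using a(1) sum.delta[of "{..<m}" a v] by (simp add: eq_commute[of _ a])
    finally show "f \<in> ?R"
      by (intro image_eqI[of _ _ "\<lambda>b. if b = a then 1 else 0"]) (use a in auto)
  qed
  then show "TV.span (v ` {..<m}) \<subseteq> ?R" using TV.span_minimal sub by blast
qed

lemma mrank_slices: "mrank d n S j = TV.dim (slice S j ` {..<n j})"
  unfolding mrank_def flatten_eq range_lincomb TV.dim_span ..




definition Lop :: "nat \<Rightarrow> (nat \<Rightarrow> nat) \<Rightarrow> (nat \<Rightarrow> nat \<Rightarrow> nat \<Rightarrow> real) \<Rightarrow> nat \<Rightarrow> tensor \<Rightarrow> tensor" where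
  "Lop d n g j F = (\<lambda>k. if k \<in> idx d n \<and> k j = 0 then
     (\<Sum>l\<in>{l\<in>idx d n. l j = 0}. (\<Prod>i\<in>{..<d}-{j}. g i (k i) (l i)) * F l) else 0)"

lemma Lop_add: "Lop d n g j (F + G) = Lop d n g j F + Lop d n g j G"
  by (auto simp: Lop_def fun_eq_iff algebra_simps sum.distrib)

lemma Lop_scale: "Lop d n g j (rscale c F) = rscale c (Lop d n g j F)"
  by (auto simp: Lop_def fun_eq_iff algebra_simps sum_distrib_left)

lemma Lop_zero: "Lop d n g j 0 = 0"
  by (auto simp: Lop_def fun_eq_iff)

lemma slice_act:
  assumes j: "j < d" and a: "a < n j"
  shows "slice (act d n g S) j a = (\<Sum>b<n j. rscale (g j a b) (Lop d n g j (slice S j b)))"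
proof
  fix k
  show "slice (act d n g S) j a k = (\<Sum>b<n j. rscale (g j a b) (Lop d n g j (slice S j b))) k"
  proof (cases "k j = 0")
    case False then show ?thesis by (simp add: slice_def sum_fun_apply Lop_def)
  next
    case kj: True
    show ?thesis
    proof (cases "k \<in> idx d n")
      case True
      have ka: "k(j:=a) \<in> idx d n" using True a j by (auto simp: idx_def)
      have "slice (act d n g S) j a k = act d n g S (k(j:=a))" using kj by (simp add: slice_def)
      also have "\<dots> = (\<Sum>l\<in>{l\<in>idx d n. l j = 0}. (\<Prod>i\<in>{..<d}-{j}. g i ((k(j:=a)) i) (l i)) * (\<Sum>b<n j. g j a b * S (l(j:=b))))"
        using act_K[OF j ka] by simp
      also have "\<dots> = (\<Sum>l\<in>{l\<in>idx d n. l j = 0}. \<Sum>b<n j. g j a b * ((\<Prod>i\<in>{..<d}-{j}. g i (k i) (l i)) * S (l(j:=b))))"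
      proof (intro sum.cong refl)
        fix l
        have "(\<Prod>i\<in>{..<d}-{j}. g i ((k(j:=a)) i) (l i)) = (\<Prod>i\<in>{..<d}-{j}. g i (k i) (l i))"
          by (intro prod.cong) auto
        then show "(\<Prod>i\<in>{..<d}-{j}. g i ((k(j:=a)) i) (l i)) * (\<Sum>b<n j. g j a b * S (l(j:=b)))
           = (\<Sum>b<n j. g j a b * ((\<Prod>i\<in>{..<d}-{j}. g i (k i) (l i)) * S (l(j:=b))))"
          by (simp add: sum_distrib_left mult.left_commute)
      qed
      also have "\<dots> = (\<Sum>b<n j. \<Sum>l\<in>{l\<in>idx d n. l j = 0}. g j a b * ((\<Prod>i\<in>{..<d}-{j}. g i (k i) (l i)) * slice S j b l))"
        by (subst sum.swap) (intro sum.cong refl, simp add: slice_def)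
      also have "\<dots> = (\<Sum>b<n j. g j a b * (\<Sum>l\<in>{l\<in>idx d n. l j = 0}. (\<Prod>i\<in>{..<d}-{j}. g i (k i) (l i)) * slice S j b l))"
        by (simp only: sum_distrib_left)
      also have "\<dots> = (\<Sum>b<n j. rscale (g j a b) (Lop d n g j (slice S j b))) k"
        using True kj by (simp add: sum_fun_apply Lop_def)
      finally show ?thesis .
    next
      case False
      have "k(j:=a) \<notin> idx d n"
      proof
        assume "k(j:=a) \<in> idx d n"
        then have H: "\<forall>i<d. (k(j:=a)) i < n i" "\<forall>i\<ge>d. (k(j:=a)) i = 0" by (auto simp: idx_def)
        have "\<forall>i<d. k i < n i"
        proof (intro allI impI)
          fix i assume "i < d"
          show "k i < n i"
          proof (cases "i = j")
            case True then show ?thesis using kj a by simp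
          next
            case False then show ?thesis using H(1) \<open>i < d\<close> by (metis fun_upd_other)
          qed
        qed
        moreover have "\<forall>i\<ge>d. k i = 0"
        proof (intro allI impI)
          fix i assume "d \<le> i"
          then show "k i = 0" using H(2) j by (metis fun_upd_other not_less)
        qed
        ultimately have "k \<in> idx d n" by (simp add: idx_def)
        then show False using False by simp
      qed
      then show ?thesis using False kj by (simp add: slice_def act_def sum_fun_apply Lop_def)
    qed
  qed
qed

lemma Lop_span:
  assumes "x \<in> TV.span B"
  shows "Lop d n g j x \<in> TV.span (Lop d n g j ` B)"
  using assms
proof (induct rule: TV.span_induct_alt)
  case base then show ?case by (subst Lop_zero) (rule TV.span_zero)
next
  case (step c x y)
  have e: "Lop d n g j (rscale c x + y) = rscale c (Lop d n g j x) + Lop d n g j y"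
    by (simp only: Lop_add Lop_scale)
  show ?case unfolding e
    by (rule TV.span_add[OF TV.span_scale[OF TV.span_base[OF imageI[OF step(1)]]] step(2)])
qed

lemma dim_Lop_le:
  assumes X: "finite X" and V: "V \<subseteq> TV.span (Lop d n g j ` X)"
  shows "TV.dim V \<le> TV.dim X"
proof -
  obtain B where B: "B \<subseteq> X" "TV.independent B" "X \<subseteq> TV.span B" "card B = TV.dim X"
    by (rule TV.basis_exists)
  have fB: "finite B" using B(1) X finite_subset by blast
  have "Lop d n g j ` X \<subseteq> TV.span (Lop d n g j ` B)" using B(3) Lop_span by blast
  then have "TV.span (Lop d n g j ` X) \<subseteq> TV.span (Lop d n g j ` B)"
    using TV.span_minimal TV.subspace_span by blast
  then have "V \<subseteq> TV.span (Lop d n g j ` B)" using V by blast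
  then have "TV.dim V \<le> card (Lop d n g j ` B)" using fB by (intro TV.dim_le_card) auto
  also have "\<dots> \<le> card B" using fB by (rule card_image_le)
  finally show ?thesis using B(4) by simp
qed

lemma mrank_act_le:
  assumes j: "j < d"
  shows "mrank d n (act d n g S) j \<le> mrank d n S j"
  unfolding mrank_slices
proof (rule dim_Lop_le[where g = g and j = j and n = n and d = d])
  show "slice (act d n g S) j ` {..<n j} \<subseteq> TV.span (Lop d n g j ` slice S j ` {..<n j})"
  proof
    fix F assume "F \<in> slice (act d n g S) j ` {..<n j}"
    then obtain a where a: "a < n j" "F = slice (act d n g S) j a" by auto
    have "(\<Sum>b<n j. rscale (g j a b) (Lop d n g j (slice S j b))) \<in> TV.span (Lop d n g j ` slice S j ` {..<n j})"
      by (intro TV.span_sum TV.span_scale TV.span_base) auto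
    then show "F \<in> TV.span (Lop d n g j ` slice S j ` {..<n j})" using a slice_act[of j d a n g S] j by simp
  qed
qed simp

lemma mrank_act_eq:
  assumes g: "g \<in> GL_prod d n" and S: "S \<in> tensors d n" and j: "j < d"
  shows "mrank d n (act d n g S) j = mrank d n S j"
proof -
  obtain h where h: "\<forall>S\<in>tensors d n. act d n h (act d n g S) = S" using GL_inv[OF g] by blast
  have "mrank d n S j = mrank d n (act d n h (act d n g S)) j" using h S by simp
  also have "\<dots> \<le> mrank d n (act d n g S) j" by (rule mrank_act_le[OF j])
  finally show ?thesis using mrank_act_le[of j d n g S] j by simp
qed

lemma act_Lambda:
  assumes "g \<in> GL_prod d n" "S \<in> Lambda d n t"
  shows "act d n g S \<in> Lambda d n t"
  using assms mrank_act_eq[OF assms(1)] unfolding Lambda_def by (simp add: act_tensors)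




declare rscale_apply[simp del]

lemma sum_if_restrict: "(\<Sum>c<(m::nat). if c \<in> I then F c else 0) = (\<Sum>c\<in>I. F c)" if "I \<subseteq> {..<m}"
proof -
  have "(\<Sum>c<m. if c \<in> I then F c else 0) = sum F ({..<m} \<inter> I)" by (rule sum.inter_restrict[symmetric]) simp
  also have "{..<m} \<inter> I = I" using that by blast
  finally show ?thesis .
qed

lemma rscale_if: "rscale (if P then a else 0) f = (if P then rscale a f else 0)"
  by simp

lemma reduce:
  fixes v u :: "nat \<Rightarrow> tensor" and m r :: nat
  assumes dim: "TV.dim (v ` {..<m}) = r"
    and uin: "\<forall>a<r. u a \<in> TV.span (v ` {..<m})"
    and uind: "\<forall>x. (\<Sum>a<r. rscale (x a) (u a)) = 0 \<longrightarrow> (\<forall>a<r. x a = 0)"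
  shows "\<exists>g. Defs.invertible_mat m g \<and> (\<forall>a<m. (\<Sum>b<m. rscale (g a b) (v b)) = (if a < r then u a else 0))"
proof -
  obtain B where B: "B \<subseteq> v ` {..<m}" "TV.independent B" "v ` {..<m} \<subseteq> TV.span B"
    by (rule TV.maximal_independent_subset)
  have cardB: "card B = r" using TV.basis_card_eq_dim[OF B(1) B(3) B(2)] dim by simp
  have finB: "finite B" using B(1) finite_subset by blast
  define I where "I = inv_into {..<m} v ` B"
  have Isub: "I \<subseteq> {..<m}" unfolding I_def using B(1) by (metis image_subsetI inv_into_into subsetD)
  have vI: "v ` I = B" unfolding I_def using B(1) by (force simp: f_inv_into_f image_image)
  have injI: "inj_on v I"
  proof (rule inj_onI)
    fix x y assume xy: "x \<in> I" "y \<in> I" "v x = v y"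
    obtain y1 where y1: "y1 \<in> B" "x = inv_into {..<m} v y1" using xy(1) unfolding I_def by auto
    obtain y2 where y2: "y2 \<in> B" "y = inv_into {..<m} v y2" using xy(2) unfolding I_def by auto
    have "v x = y1" using y1 B(1) by (simp add: f_inv_into_f subsetD)
    moreover have "v y = y2" using y2 B(1) by (simp add: f_inv_into_f subsetD)
    ultimately show "x = y" using xy(3) y1 y2 by simp
  qed
  have cardI: "card I = r" using card_image[OF injI] vI cardB by simp
  have finI: "finite I" using Isub finite_subset by blast
  have rm: "r \<le> m" using card_mono[OF _ Isub] cardI by simp
  have spanB: "TV.span (v ` {..<m}) \<subseteq> TV.span B"
    using B(3) TV.span_minimal TV.subspace_span by blast
  have rep: "\<exists>c. y = (\<Sum>w\<in>B. rscale (c w) w)" if "y \<in> TV.span B" for y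
    using that TV.span_finite[OF finB] by auto
  have "\<forall>b. \<exists>c. b < m \<longrightarrow> v b = (\<Sum>w\<in>B. rscale (c w) w)"
  proof
    fix b
    show "\<exists>c. b < m \<longrightarrow> v b = (\<Sum>w\<in>B. rscale (c w) w)"
    proof (cases "b < m")
      case True
      then have "v b \<in> TV.span B" using B(3) by auto
      then show ?thesis using rep by blast
    qed simp
  qed
  from choice[OF this] obtain cv where cv: "\<forall>b<m. v b = (\<Sum>w\<in>B. rscale (cv b w) w)"
    by blast
  have "\<forall>a. \<exists>c. a < r \<longrightarrow> u a = (\<Sum>w\<in>B. rscale (c w) w)"
  proof
    fix a
    show "\<exists>c. a < r \<longrightarrow> u a = (\<Sum>w\<in>B. rscale (c w) w)"
    proof (cases "a < r")
      case True
      then have "u a \<in> TV.span B" using uin spanB by auto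
      then show ?thesis using rep by blast
    qed simp
  qed
  from choice[OF this] obtain cu where cu: "\<forall>a<r. u a = (\<Sum>w\<in>B. rscale (cu a w) w)"
    by blast
  have reidx: "(\<Sum>c<m. rscale (if c \<in> I then \<alpha> (v c) else 0) (v c)) = (\<Sum>w\<in>B. rscale (\<alpha> w) w)" for \<alpha>
  proof -
    have "(\<Sum>c<m. rscale (if c \<in> I then \<alpha> (v c) else 0) (v c)) = (\<Sum>c<m. if c \<in> I then rscale (\<alpha> (v c)) (v c) else 0)"
      by (simp only: rscale_if)
    also have "\<dots> = (\<Sum>c\<in>I. rscale (\<alpha> (v c)) (v c))" by (rule sum_if_restrict[OF Isub])
    also have "\<dots> = (\<Sum>w\<in>v ` I. rscale (\<alpha> w) w)" by (rule sum.reindex[OF injI, symmetric, unfolded comp_def])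
    finally show ?thesis using vI by simp
  qed
  have c1: "card {r..<m} = card ({..<m} - I)" using cardI Isub finI by (simp add: card_Diff_subset)
  obtain f2 where f2: "bij_betw f2 {r..<m} ({..<m} - I)"
    using finite_same_card_bij[OF _ _ c1] by auto
  define g where "g a c = (if a < r then (if c \<in> I then cu a (v c) else 0)
      else ((if c = f2 a then 1 else 0) - (if c \<in> I then cv (f2 a) (v c) else 0)))" for a c
  have rows: "(\<Sum>b<m. rscale (g a b) (v b)) = (if a < r then u a else 0)" if a: "a < m" for a
  proof (cases "a < r")
    case True
    have "(\<Sum>b<m. rscale (g a b) (v b)) = (\<Sum>b<m. rscale (if b \<in> I then cu a (v b) else 0) (v b))"
      using True by (simp add: g_def)
    also have "\<dots> = u a" using reidx[of "cu a"] cu True by simp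
    finally show ?thesis using True by simp
  next
    case False
    have fa: "f2 a < m" "f2 a \<notin> I" using f2 False a by (auto simp: bij_betw_def)
    have "(\<Sum>b<m. rscale (g a b) (v b)) = (\<Sum>b<m. rscale (if b = f2 a then 1 else 0) (v b) - rscale (if b \<in> I then cv (f2 a) (v b) else 0) (v b))"
      using False by (simp add: g_def TV.scale_left_diff_distrib)
    also have "\<dots> = (\<Sum>b<m. rscale (if b = f2 a then 1 else 0) (v b)) - (\<Sum>b<m. rscale (if b \<in> I then cv (f2 a) (v b) else 0) (v b))"
      by (rule sum_subtractf)
    also have "(\<Sum>b<m. rscale (if b = f2 a then 1 else 0) (v b)) = (\<Sum>b<m. if b = f2 a then v b else 0)"
      by (intro sum.cong) auto
    also have "\<dots> = v (f2 a)" using fa(1) by (simp add: sum.delta)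
    also have "(\<Sum>b<m. rscale (if b \<in> I then cv (f2 a) (v b) else 0) (v b)) = v (f2 a)"
      using reidx[of "cv (f2 a)"] cv fa(1) by simp
    finally show ?thesis using False by (simp add: zero_fun_def)
  qed
  have inv: "Defs.invertible_mat m g"
  proof (rule inv_crit)
    fix x assume H: "\<forall>c<m. (\<Sum>a<m. x a * g a c) = 0"
    have "(\<Sum>a<m. rscale (x a) (\<Sum>b<m. rscale (g a b) (v b))) = (\<Sum>b<m. rscale (\<Sum>a<m. x a * g a b) (v b))"
      unfolding fun_eq_iff
      by (simp add: rscale_apply sum_fun_apply sum_distrib_left sum_distrib_right mult.assoc) (intro allI sum.swap)
    also have "\<dots> = 0" using H by simp
    also have "(\<Sum>a<m. rscale (x a) (\<Sum>b<m. rscale (g a b) (v b))) = (\<Sum>a<m. if a < r then rscale (x a) (u a) else 0)"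
      using rows by (intro sum.cong) auto
    also have "\<dots> = (\<Sum>a<r. rscale (x a) (u a))"
    proof -
      have "(\<Sum>a<m. if a < r then rscale (x a) (u a) else 0) = (\<Sum>a<m. if a \<in> {..<r} then rscale (x a) (u a) else 0)"
        by simp
      also have "\<dots> = (\<Sum>a<r. rscale (x a) (u a))" using rm by (intro sum_if_restrict) auto
      finally show ?thesis .
    qed
    finally have x1: "\<forall>a<r. x a = 0" using uind by blast
    show "\<forall>a<m. x a = 0"
    proof (intro allI impI)
      fix a' assume a': "a' < m"
      show "x a' = 0"
      proof (cases "a' < r")
        case True then show ?thesis using x1 by simp
      next
        case False
        have fa: "f2 a' < m" "f2 a' \<notin> I" using f2 False a' by (auto simp: bij_betw_def)
        have "(\<Sum>a<m. x a * g a (f2 a')) = (\<Sum>a<m. if a = a' then x a' else 0)"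
        proof (intro sum.cong refl)
          fix a assume a: "a \<in> {..<m}"
          show "x a * g a (f2 a') = (if a = a' then x a' else 0)"
          proof (cases "a < r")
            case True then show ?thesis using x1 False by auto
          next
            case False2: False
            have "f2 a' = f2 a \<longleftrightarrow> a' = a"
              using f2 a a' False False2 unfolding bij_betw_def inj_on_def by auto
            then show ?thesis using False2 fa by (auto simp: g_def)
          qed
        qed
        also have "\<dots> = x a'" using a' by simp
        finally show ?thesis using H fa by simp
      qed
    qed
  qed
  show ?thesis using inv rows by blast
qed




declare rscale_apply[simp del]

lemma iota_cong: "(\<forall>i\<in>{1..<d}. k i = k' i) \<Longrightarrow> iota d t k = iota d t k'"
  unfolding iota_def by (intro sum.cong refl) auto

lemma iota_Suc:
  assumes "1 \<le> d"
  shows "iota (Suc d) t k = iota d t k * t d + k d"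
proof -
  have e1: "{1..<Suc d} = insert d {1..<d}" using assms by auto
  have e2: "(\<Prod>j\<in>{i<..<Suc d}. t j) = (\<Prod>j\<in>{i<..<d}. t j) * t d" if "i \<in> {1..<d}" for i
  proof -
    have "{i<..<Suc d} = insert d {i<..<d}" using that by auto
    then show ?thesis by (simp add: mult.commute)
  qed
  have e3: "{d<..<Suc d} = {}" by auto
  have "iota (Suc d) t k = k d * (\<Prod>j\<in>{d<..<Suc d}. t j) + (\<Sum>i\<in>{1..<d}. k i * (\<Prod>j\<in>{i<..<Suc d}. t j))"
    unfolding iota_def e1 by simp
  also have "\<dots> = k d + (\<Sum>i\<in>{1..<d}. k i * (\<Prod>j\<in>{i<..<d}. t j) * t d)"
    using e2 e3 by (simp add: mult.assoc)
  also have "\<dots> = iota d t k * t d + k d"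
    unfolding iota_def by (simp add: sum_distrib_right)
  finally show ?thesis .
qed

lemma mixed_lt: "(x::nat) < P \<Longrightarrow> y < T \<Longrightarrow> x * T + y < P * T"
proof -
  assume "x < P" "y < T"
  then have "x * T + y < x * T + T" by simp
  also have "\<dots> = (x + 1) * T" by simp
  also have "\<dots> \<le> P * T" using \<open>x < P\<close> by (intro mult_right_mono) auto
  finally show ?thesis .
qed

lemma iota_bound:
  "(\<forall>i\<in>{1..<d}. k i < t i) \<Longrightarrow> iota d t k < (\<Prod>i\<in>{1..<d}. t i)"
proof (induct d)
  case 0 then show ?case by (simp add: iota_def)
next
  case (Suc d)
  show ?case
  proof (cases "d = 0")
    case True then show ?thesis by (simp add: iota_def)
  next
    case False
    then have d1: "1 \<le> d" by simp
    have "{1..<Suc d} = insert d {1..<d}" using d1 by auto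
    then have P: "(\<Prod>i\<in>{1..<Suc d}. t i) = (\<Prod>i\<in>{1..<d}. t i) * t d" by (simp add: mult.commute)
    have "iota d t k < (\<Prod>i\<in>{1..<d}. t i)" using Suc by auto
    moreover have "k d < t d" using Suc.prems d1 by auto
    ultimately show ?thesis unfolding iota_Suc[OF d1] P by (rule mixed_lt)
  qed
qed

lemma iota_inj:
  "(\<forall>i\<in>{1..<d}. k i < t i \<and> k' i < t i) \<Longrightarrow> iota d t k = iota d t k' \<Longrightarrow> (\<forall>i\<in>{1..<d}. k i = k' i)"
proof (induct d)
  case 0 then show ?case by simp
next
  case (Suc d)
  show ?case
  proof (cases "d = 0")
    case True then show ?thesis by simp
  next
    case False
    then have d1: "1 \<le> d" by simp
    have kd: "k d < t d" "k' d < t d" using Suc.prems d1 by auto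
    have eq: "iota d t k * t d + k d = iota d t k' * t d + k' d"
      using Suc.prems(2) unfolding iota_Suc[OF d1] .
    have "k d = k' d"
      using arg_cong[OF eq, of "\<lambda>x. x mod t d"] kd by simp
    moreover have "iota d t k = iota d t k'"
      using arg_cong[OF eq, of "\<lambda>x. x div t d"] kd by simp
    then have "\<forall>i\<in>{1..<d}. k i = k' i" using Suc by auto
    ultimately show ?thesis using less_Suc_eq by auto
  qed
qed

lemma indep_pts:
  fixes w :: "nat \<Rightarrow> tensor" and p :: "nat \<Rightarrow> nat \<Rightarrow> nat"
  assumes H: "\<forall>a<r. \<forall>b<r. w b (p a) = (if a = b then 1 else 0)"
  shows indep_pts_fam: "\<forall>x. (\<Sum>a<r. rscale (x a) (w a)) = 0 \<longrightarrow> (\<forall>a<r. x a = 0)"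
    and indep_pts_inj: "inj_on w {..<r}"
    and indep_pts_set: "TV.independent (w ` {..<r})"
proof -
  show fam: "\<forall>x. (\<Sum>a<r. rscale (x a) (w a)) = 0 \<longrightarrow> (\<forall>a<r. x a = 0)"
  proof (intro allI impI)
    fix x b assume S: "(\<Sum>a<r. rscale (x a) (w a)) = 0" and b: "b < r"
    have "0 = (\<Sum>a<r. rscale (x a) (w a)) (p b)" using S by simp
    also have "\<dots> = (\<Sum>a<r. x a * w a (p b))" by (simp add: sum_fun_apply rscale_apply)
    also have "\<dots> = (\<Sum>a<r. if a = b then x a else 0)" by (rule sum.cong) (use H b in auto)
    also have "\<dots> = x b" using b by simp
    finally show "x b = 0" by simp
  qed
  show inj: "inj_on w {..<r}"
  proof (rule inj_onI)
    fix a b assume "a \<in> {..<r}" "b \<in> {..<r}" "w a = w b"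
    then show "a = b" using H by (metis lessThan_iff zero_neq_one)
  qed
  show "TV.independent (w ` {..<r})"
  proof (rule TV.independent_if_scalars_zero)
    show "finite (w ` {..<r})" by simp
  next
    fix f y assume S: "(\<Sum>y\<in>w ` {..<r}. rscale (f y) y) = 0" and y: "y \<in> w ` {..<r}"
    have "(\<Sum>a<r. rscale (f (w a)) (w a)) = 0"
      using S by (simp add: sum.reindex[OF inj])
    then have "\<forall>a<r. (\<lambda>a. f (w a)) a = 0" using fam[rule_format, of "\<lambda>a. f (w a)"] by simp
    then show "f y = 0" using y by auto
  qed
qed

lemma dim_pts:
  fixes w :: "nat \<Rightarrow> tensor" and p :: "nat \<Rightarrow> nat \<Rightarrow> nat"
  assumes H: "\<forall>a<r. \<forall>b<r. w b (p a) = (if a = b then 1 else 0)"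
    and Z: "\<forall>a. r \<le> a \<and> a < m \<longrightarrow> w a = 0" and rm: "r \<le> m"
  shows "TV.dim (w ` {..<m}) = r"
proof (rule TV.dim_unique[where B = "w ` {..<r}"])
  show "w ` {..<r} \<subseteq> w ` {..<m}" using rm by auto
  show "w ` {..<m} \<subseteq> TV.span (w ` {..<r})"
  proof
    fix y assume "y \<in> w ` {..<m}"
    then obtain a where a: "a < m" "y = w a" by auto
    show "y \<in> TV.span (w ` {..<r})"
    proof (cases "a < r")
      case True then show ?thesis using a by (auto intro: TV.span_base)
    next
      case False then show ?thesis using a Z TV.span_zero by auto
    qed
  qed
  show "TV.independent (w ` {..<r})" by (rule indep_pts_set[where w=w and p=p and r=r, OF H])
  show "card (w ` {..<r}) = r" using card_image[OF indep_pts_inj[where w=w and p=p and r=r, OF H]] by simp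
qed




declare rscale_apply[simp del]

context
  fixes d :: nat and n t :: "nat \<Rightarrow> nat"
  assumes d1: "1 \<le> d" and nt: "\<forall>i<d. 0 < t i \<and> t i \<le> n i" and t0: "t 0 = (\<Prod>i\<in>{1..<d}. t i)"
begin

abbreviation "NN \<equiv> normal_tensor d n t"
abbreviation "RR \<equiv> {k \<in> idx d n. k 0 = 0 \<and> (\<forall>i\<in>{1..<d}. k i < t i)}"

lemma RR_idx: "RR = idx d (t(0:=1))"
proof
  show "RR \<subseteq> idx d (t(0:=1))"
    by (auto simp: idx_def)
  show "idx d (t(0:=1)) \<subseteq> RR"
  proof
    fix k assume k: "k \<in> idx d (t(0:=1))"
    have k0: "k 0 = 0" using k d1 by (auto simp: idx_def)
    have "\<forall>i<d. k i < n i"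
    proof (intro allI impI)
      fix i assume i: "i < d"
      show "k i < n i"
      proof (cases "i = 0")
        case True then show ?thesis using k0 nt i by auto
      next
        case False
        then have "k i < t i" using k i by (auto simp: idx_def)
        then show ?thesis using nt i by (meson order.strict_trans2)
      qed
    qed
    then show "k \<in> RR" using k k0 by (auto simp: idx_def)
  qed
qed

lemma card_RR: "card RR = t 0"
proof -
  have e: "{..<d} = insert 0 {1..<d}" using d1 by auto
  have "card RR = (\<Prod>i<d. (t(0:=1)) i)" unfolding RR_idx card_idx ..
  also have "\<dots> = (\<Prod>i\<in>{1..<d}. (t(0:=1)) i)" unfolding e by simp
  also have "\<dots> = (\<Prod>i\<in>{1..<d}. t i)" by (intro prod.cong) auto
  finally show ?thesis using t0 by simp
qed

lemma iota_RR: "k \<in> RR \<Longrightarrow> iota d t k < t 0"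
  using iota_bound[of d k t] t0 by auto

lemma inj_RR: "inj_on (iota d t) RR"
proof (rule inj_onI)
  fix k k' assume k: "k \<in> RR" and k': "k' \<in> RR" and eq: "iota d t k = iota d t k'"
  have A: "\<forall>i\<in>{1..<d}. k i = k' i" using iota_inj[OF _ eq] k k' by auto
  show "k = k'"
  proof
    fix i show "k i = k' i"
    proof (cases "i = 0")
      case True then show ?thesis using k k' by simp
    next
      case False
      show ?thesis
      proof (cases "i < d")
        case True then show ?thesis using A False by auto
      next
        case False then show ?thesis using k k' by (auto simp: idx_def)
      qed
    qed
  qed
qed

lemma finite_RR: "finite RR" using finite_idx by simp

lemma iota_RR_image: "iota d t ` RR = {..<t 0}"
proof (rule card_subset_eq)
  show "finite {..<t 0}" by simp
  show "iota d t ` RR \<subseteq> {..<t 0}" using iota_RR by auto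
  show "card (iota d t ` RR) = card {..<t 0}" using card_image[OF inj_RR] card_RR by simp
qed

definition kappa :: "nat \<Rightarrow> nat \<Rightarrow> nat" where "kappa c = inv_into RR (iota d t) c"

lemma kappa: "c < t 0 \<Longrightarrow> kappa c \<in> RR \<and> iota d t (kappa c) = c"
proof -
  assume "c < t 0"
  then have c: "c \<in> iota d t ` RR" using iota_RR_image by simp
  show ?thesis unfolding kappa_def using inv_into_into[OF c] f_inv_into_f[OF c] by blast
qed

lemma N_tensor: "NN \<in> tensors d n"
  by (simp add: tensors_def normal_tensor_def)

lemma u_zero: "t 0 \<le> a \<Longrightarrow> slice NN 0 a = 0"
proof
  fix k assume a: "t 0 \<le> a"
  show "slice NN 0 a k = 0 k"
  proof (cases "k 0 = 0 \<and> NN (k(0:=a)) \<noteq> 0")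
    case True
    then have H: "\<forall>i\<in>{1..<d}. (k(0:=a)) i < t i" "a = iota d t (k(0:=a))"
      by (auto simp: normal_tensor_def split: if_splits)
    have "iota d t (k(0:=a)) < t 0" using iota_bound[OF H(1)] by (simp only: t0)
    then show ?thesis using H(2) a by simp
  next
    case False then show ?thesis by (auto simp: slice_def)
  qed
qed

lemma u_delta:
  assumes k: "k \<in> RR"
  shows "slice NN 0 (iota d t k) = (\<lambda>k'. if k' = k then 1 else 0)"
proof
  fix k'
  show "slice NN 0 (iota d t k) k' = (if k' = k then 1 else 0)"
  proof (cases "k' 0 = 0")
    case False
    then have "k' \<noteq> k" using k by auto
    then show ?thesis using False by (simp add: slice_def)
  next
    case True
    have ic: "iota d t (k'(0:=iota d t k)) = iota d t k'" by (rule iota_cong) auto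
    show ?thesis
    proof (cases "k' = k")
      case True
      have "t 0 \<le> n 0" using nt d1 by auto
      then have "iota d t k < n 0" using iota_RR[OF k] by linarith
      then have "k(0:=iota d t k) \<in> idx d n" using k d1 by (auto simp: idx_def)
      then show ?thesis using True k ic by (simp add: slice_def normal_tensor_def)
    next
      case False
      have "NN (k'(0:=iota d t k)) = 0"
      proof (rule ccontr)
        assume "NN (k'(0:=iota d t k)) \<noteq> 0"
        then have H: "k'(0:=iota d t k) \<in> idx d n" "\<forall>i\<in>{1..<d}. k' i < t i" "iota d t k = iota d t k'"
          using ic by (auto simp: normal_tensor_def split: if_splits)
        have H1: "\<forall>i<d. (k'(0:=iota d t k)) i < n i" "\<forall>i\<ge>d. (k'(0:=iota d t k)) i = 0"
          using H(1) by (auto simp: idx_def)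
        have "\<forall>i<d. k' i < n i"
        proof (intro allI impI)
          fix i assume i: "i < d"
          show "k' i < n i"
          proof (cases "i = 0")
            case True then show ?thesis using \<open>k' 0 = 0\<close> nt i by auto
          next
            case False then show ?thesis using H1(1) i by (metis fun_upd_other)
          qed
        qed
        moreover have "\<forall>i\<ge>d. k' i = 0"
        proof (intro allI impI)
          fix i assume i: "d \<le> i"
          then have "i \<noteq> 0" using d1 by auto
          then show "k' i = 0" using H1(2) i by (metis fun_upd_other)
        qed
        ultimately have "k' \<in> idx d n" by (simp add: idx_def)
        then have "k' \<in> RR" using True H(2) by simp
        then show False using inj_RR k H(3) False by (auto dest: inj_onD)
      qed
      then show ?thesis using False True by (simp add: slice_def)
    qed
  qed
qed


lemma u_pts: "\<forall>a<t 0. \<forall>b<t 0. slice NN 0 b (kappa a) = (if a = b then 1 else 0)"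
proof (intro allI impI)
  fix a b assume a: "a < t 0" and b: "b < t 0"
  have "slice NN 0 b = (\<lambda>k'. if k' = kappa b then 1 else 0)"
    using u_delta[of "kappa b"] kappa[OF b] by simp
  moreover have "kappa a = kappa b \<longleftrightarrow> a = b"
  proof
    assume "kappa a = kappa b"
    then have "iota d t (kappa a) = iota d t (kappa b)" by simp
    then show "a = b" using kappa[OF a] kappa[OF b] by simp
  qed simp
  ultimately show "slice NN 0 b (kappa a) = (if a = b then 1 else 0)" by simp
qed

lemma mrank_N0: "mrank d n NN 0 = t 0"
  unfolding mrank_slices
proof (rule dim_pts[where w = "slice NN 0" and p = kappa and r = "t 0" and m = "n 0", OF u_pts])
  show "\<forall>a. t 0 \<le> a \<and> a < n 0 \<longrightarrow> slice NN 0 a = 0" using u_zero by blast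
  show "t 0 \<le> n 0" using nt d1 by auto
qed

lemma mrank_Nj:
  assumes j: "j \<in> {1..<d}"
  shows "mrank d n NN j = t j"
proof -
  define ej where "ej a = (\<lambda>i::nat. if i = j then a else (0::nat))" for a
  define q where "q a = (\<lambda>i::nat. if i = 0 then iota d t (ej a) else (0::nat))" for a
  have ejb: "\<forall>i\<in>{1..<d}. ej a i < t i" if "a < t j" for a
    using that nt unfolding ej_def by auto
  have pts: "\<forall>a<t j. \<forall>b<t j. slice NN j b (q a) = (if a = b then 1 else 0)"
  proof (intro allI impI)
    fix a b assume a: "a < t j" and b: "b < t j"
    define K where "K = (q a)(j:=b)"
    have j0: "j \<noteq> 0" "j < d" using j by auto
    have qj: "q a j = 0" using j0 by (simp add: q_def)
    have ia: "iota d t (ej a) < t 0" using iota_bound[OF ejb[OF a]] by (simp only: t0)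
    have Kidx: "K \<in> idx d n"
      unfolding idx_def
    proof (intro CollectI conjI allI impI)
      fix i assume i: "i < d"
      show "K i < n i"
      proof (cases "i = 0")
        case True then show ?thesis using ia nt i j0 by (auto simp: K_def q_def)
      next
        case False then show ?thesis using b nt i by (auto simp: K_def q_def)
      qed
    next
      fix i assume i: "d \<le> i"
      then show "K i = 0" using j0 d1 by (auto simp: K_def q_def)
    qed
    have Kt: "\<forall>i\<in>{1..<d}. K i < t i" using b nt by (auto simp: K_def q_def)
    have iK: "iota d t K = iota d t (ej b)" by (rule iota_cong) (auto simp: K_def q_def ej_def)
    have "iota d t (ej a) = iota d t (ej b) \<longleftrightarrow> a = b"
    proof
      assume "iota d t (ej a) = iota d t (ej b)"
      then have "\<forall>i\<in>{1..<d}. ej a i = ej b i" using iota_inj[of d "ej a" t "ej b"] ejb[OF a] ejb[OF b] by blast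
      then have "ej a j = ej b j" using j by blast
      then show "a = b" by (simp add: ej_def)
    qed simp
    then have "NN K = (if a = b then 1 else 0)"
      using Kidx Kt iK j0 by (simp add: normal_tensor_def K_def q_def)
    then show "slice NN j b (q a) = (if a = b then 1 else 0)"
      using qj by (simp add: slice_def K_def)
  qed
  have zero: "\<forall>b. t j \<le> b \<and> b < n j \<longrightarrow> slice NN j b = 0"
  proof (intro allI impI)
    fix b assume b: "t j \<le> b \<and> b < n j"
    have "NN (k(j:=b)) = 0" for k
      using b j by (auto simp: normal_tensor_def)
    then show "slice NN j b = 0" by (auto simp: slice_def fun_eq_iff)
  qed
  show ?thesis unfolding mrank_slices
    by (rule dim_pts[where w = "slice NN j" and p = q and r = "t j" and m = "n j", OF pts zero]) (use nt j in auto)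
qed

lemma N_Lambda: "NN \<in> Lambda d n t"
  unfolding Lambda_def
proof (intro CollectI conjI allI impI N_tensor)
  fix i assume "i < d"
  then show "mrank d n NN i = t i"
    by (cases "i = 0") (auto simp: mrank_N0 intro: mrank_Nj)
qed

lemma supp_span:
  assumes F: "\<forall>k. F k \<noteq> 0 \<longrightarrow> k \<in> RR"
  shows "F \<in> TV.span (slice NN 0 ` {..<t 0})"
proof -
  have "F = (\<Sum>k\<in>RR. rscale (F k) (\<lambda>k'. if k' = k then 1 else 0))"
  proof
    fix k'
    have "(\<Sum>k\<in>RR. rscale (F k) (\<lambda>k'. if k' = k then 1 else 0)) k' = (\<Sum>k\<in>RR. if k = k' then F k' else 0)"
      by (simp add: sum_fun_apply rscale_apply) (intro sum.cong refl, auto)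
    also have "\<dots> = F k'" using F finite_RR by auto
    finally show "F k' = (\<Sum>k\<in>RR. rscale (F k) (\<lambda>k'. if k' = k then 1 else 0)) k'" by simp
  qed
  also have "\<dots> \<in> TV.span (slice NN 0 ` {..<t 0})"
  proof (intro TV.span_sum TV.span_scale TV.span_base)
    fix k assume k: "k \<in> RR"
    show "(\<lambda>k'. if k' = k then 1 else 0) \<in> slice NN 0 ` {..<t 0}"
      using u_delta[OF k] iota_RR[OF k] by (intro image_eqI[of _ _ "iota d t k"]) auto
  qed
  finally show ?thesis .
qed

end




declare rscale_apply[simp del]

lemma reduce0:
  fixes v :: "nat \<Rightarrow> tensor" and m r :: nat
  assumes dim: "TV.dim (v ` {..<m}) = r"
  shows "\<exists>g. Defs.invertible_mat m g \<and> (\<forall>a<m. r \<le> a \<longrightarrow> (\<Sum>b<m. rscale (g a b) (v b)) = 0)"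
proof -
  obtain B where B: "B \<subseteq> v ` {..<m}" "TV.independent B" "v ` {..<m} \<subseteq> TV.span B" "card B = TV.dim (v ` {..<m})"
    by (rule TV.basis_exists)
  have finB: "finite B" using B(1) finite_subset by blast
  obtain f where f: "bij_betw f {0..<card B} B" using ex_bij_betw_nat_finite[OF finB] by blast
  have f': "bij_betw f {..<r} B" using f B(4) dim by (simp add: atLeast0LessThan)
  have injf: "inj_on f {..<r}" and imf: "f ` {..<r} = B" using f' by (auto simp: bij_betw_def)
  have uin: "\<forall>a<r. f a \<in> TV.span (v ` {..<m})"
  proof (intro allI impI)
    fix a assume "a < r"
    then have "f a \<in> v ` {..<m}" using imf B(1) by blast
    then show "f a \<in> TV.span (v ` {..<m})" by (rule TV.span_base)
  qed
  have uind: "\<forall>x. (\<Sum>a<r. rscale (x a) (f a)) = 0 \<longrightarrow> (\<forall>a<r. x a = 0)"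
  proof (intro allI impI)
    fix x a assume S: "(\<Sum>a<r. rscale (x a) (f a)) = 0" and a: "a < r"
    define c where "c y = x (inv_into {..<r} f y)" for y
    have "(\<Sum>y\<in>B. rscale (c y) y) = (\<Sum>a<r. rscale (c (f a)) (f a))"
      unfolding imf[symmetric] by (rule sum.reindex[OF injf, unfolded comp_def])
    also have "\<dots> = (\<Sum>a<r. rscale (x a) (f a))"
      by (intro sum.cong refl) (simp add: c_def inv_into_f_f[OF injf])
    finally have "(\<Sum>y\<in>B. rscale (c y) y) = 0" using S by simp
    then have "\<forall>y\<in>B. c y = 0" using B(2) finB unfolding TV.independent_explicit_finite_subsets by blast
    then have "c (f a) = 0" using imf a by blast
    then show "x a = 0" by (simp add: c_def inv_into_f_f[OF injf] a)
  qed
  obtain g where g: "Defs.invertible_mat m g" "\<forall>a<m. (\<Sum>b<m. rscale (g a b) (v b)) = (if a < r then f a else 0)"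
    using reduce[OF dim uin uind] by blast
  then show ?thesis by (intro exI[of _ g]) auto
qed

lemma span_contains:
  fixes V U :: "tensor set"
  assumes VU: "V \<subseteq> TV.span U" and fU: "finite U" and iU: "TV.independent U"
    and dV: "TV.dim V = card U"
  shows "U \<subseteq> TV.span V"
proof -
  obtain B where B: "B \<subseteq> V" "TV.independent B" "V \<subseteq> TV.span B" "card B = TV.dim V"
    by (rule TV.basis_exists)
  have BU: "B \<subseteq> TV.span U" using B(1) VU by blast
  have finB: "finite B" using TV.independent_span_bound[OF fU B(2) BU] by blast
  have "U \<subseteq> TV.span B"
  proof
    fix x assume x: "x \<in> U"
    show "x \<in> TV.span B"
    proof (rule ccontr)
      assume nx: "x \<notin> TV.span B"
      then have "TV.independent (insert x B)" using B(2) by (rule TV.independent_insertI)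
      moreover have "insert x B \<subseteq> TV.span U" using BU x TV.span_base by blast
      ultimately have "card (insert x B) \<le> card U" using TV.independent_span_bound[OF fU] by blast
      moreover have "x \<notin> B" using nx TV.span_base by blast
      ultimately show False using card_insert_disjoint[OF finB] B(4) dV by simp
    qed
  qed
  also have "TV.span B \<subseteq> TV.span V" using B(1) by (rule TV.span_mono)
  finally show ?thesis .
qed




declare rscale_apply[simp del]

context
  fixes d :: nat and n t :: "nat \<Rightarrow> nat"
  assumes d1: "1 \<le> d" and nt: "\<forall>i<d. 0 < t i \<and> t i \<le> n i" and t0: "t 0 = (\<Prod>i\<in>{1..<d}. t i)"
begin

lemma orbit_main:
  assumes S: "S \<in> Lambda d n t"
  shows "\<exists>g\<in>GL_prod d n. act d n g (normal_tensor d n t) = S"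
proof -
  let ?N = "normal_tensor d n t"
  have St: "S \<in> tensors d n" and Sr: "\<forall>i<d. mrank d n S i = t i" using S by (auto simp: Lambda_def)
  have "\<forall>j. \<exists>G. j \<in> {1..<d} \<longrightarrow> Defs.invertible_mat (n j) G \<and>
        (\<forall>a<n j. t j \<le> a \<longrightarrow> (\<Sum>b<n j. rscale (G a b) (slice S j b)) = 0)"
  proof
    fix j
    show "\<exists>G. j \<in> {1..<d} \<longrightarrow> Defs.invertible_mat (n j) G \<and>
        (\<forall>a<n j. t j \<le> a \<longrightarrow> (\<Sum>b<n j. rscale (G a b) (slice S j b)) = 0)"
    proof (cases "j \<in> {1..<d}")
      case True
      then have "TV.dim (slice S j ` {..<n j}) = t j" using Sr mrank_slices by auto
      then show ?thesis using reduce0 by blast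
    next
      case False then show ?thesis by blast
    qed
  qed
  from choice[OF this] obtain Gf where Gf: "\<forall>j\<in>{1..<d}. Defs.invertible_mat (n j) (Gf j) \<and>
        (\<forall>a<n j. t j \<le> a \<longrightarrow> (\<Sum>b<n j. rscale (Gf j a b) (slice S j b)) = 0)"
    by blast
  define g1 where "g1 i = (if i = 0 then idm else Gf i)" for i
  have g1GL: "g1 \<in> GL_prod d n" unfolding GL_prod_def g1_def using Gf invertible_idm by auto
  define S' where "S' = act d n g1 S"
  have S't: "S' \<in> tensors d n" unfolding S'_def by (rule act_tensors)
  have S'r: "mrank d n S' 0 = t 0" unfolding S'_def using mrank_act_eq[OF g1GL St] Sr d1 by simp
  have S'supp: "k \<in> idx d n \<and> (\<forall>j\<in>{1..<d}. k j < t j)" if nz: "S' k \<noteq> 0" for k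
  proof -
    have k: "k \<in> idx d n" using nz S't by (auto simp: tensors_def)
    have "k j < t j" if j: "j \<in> {1..<d}" for j
    proof (rule ccontr)
      assume "\<not> k j < t j"
      then have tj: "t j \<le> k j" by simp
      have kj: "k j < n j" using k j by (auto simp: idx_def)
      have jd: "j < d" "j \<noteq> 0" using j by auto
      have "S' k = (\<Sum>l\<in>{l\<in>idx d n. l j = 0}. (\<Prod>i\<in>{..<d}-{j}. g1 i (k i) (l i)) * (\<Sum>b<n j. g1 j (k j) b * S (l(j:=b))))"
        unfolding S'_def by (rule act_K[OF jd(1) k])
      also have "\<dots> = 0"
      proof (intro sum.neutral ballI)
        fix l assume l: "l \<in> {l\<in>idx d n. l j = 0}"
        have "(\<Sum>b<n j. g1 j (k j) b * S (l(j:=b))) = (\<Sum>b<n j. rscale (Gf j (k j) b) (slice S j b)) l"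
          using l jd by (simp add: sum_fun_apply rscale_apply slice_def g1_def)
        also have "\<dots> = 0" using Gf j kj tj by simp
        finally show "(\<Prod>i\<in>{..<d}-{j}. g1 i (k i) (l i)) * (\<Sum>b<n j. g1 j (k j) b * S (l(j:=b))) = 0" by simp
      qed
      finally show False using nz by simp
    qed
    then show ?thesis using k by blast
  qed
  have sl_span: "slice S' 0 b \<in> TV.span (slice ?N 0 ` {..<t 0})" for b
  proof (rule supp_span[OF d1 nt t0])
    show "\<forall>k. slice S' 0 b k \<noteq> 0 \<longrightarrow> k \<in> {k \<in> idx d n. k 0 = 0 \<and> (\<forall>i\<in>{1..<d}. k i < t i)}"
    proof (intro allI impI)
      fix k assume nz: "slice S' 0 b k \<noteq> 0"
      then have k0: "k 0 = 0" and nz': "S' (k(0:=b)) \<noteq> 0" by (auto simp: slice_def split: if_splits)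
      from S'supp[OF nz'] have H: "k(0:=b) \<in> idx d n" "\<forall>j\<in>{1..<d}. (k(0:=b)) j < t j" by auto
      have "\<forall>i<d. k i < n i"
      proof (intro allI impI)
        fix i assume i: "i < d"
        show "k i < n i"
        proof (cases "i = 0")
          case True then show ?thesis using k0 nt i by auto
        next
          case False then show ?thesis using H(1) i by (auto simp: idx_def)
        qed
      qed
      moreover have "\<forall>i\<ge>d. k i = 0"
      proof (intro allI impI)
        fix i assume i: "d \<le> i"
        then have "i \<noteq> 0" using d1 by auto
        then show "k i = 0" using H(1) i unfolding idx_def by (metis (mono_tags, lifting) fun_upd_other mem_Collect_eq)
      qed
      moreover have "\<forall>j\<in>{1..<d}. k j < t j" using H(2) by auto
      ultimately show "k \<in> {k \<in> idx d n. k 0 = 0 \<and> (\<forall>i\<in>{1..<d}. k i < t i)}" using k0 by (simp add: idx_def)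
    qed
  qed
  have dimS': "TV.dim (slice S' 0 ` {..<n 0}) = t 0" using S'r mrank_slices by metis
  have upts: "\<forall>a<t 0. \<forall>b<t 0. slice ?N 0 b (kappa d n t a) = (if a = b then 1 else 0)"
    by (rule u_pts[OF d1 nt t0])
  have uind: "\<forall>x. (\<Sum>a<t 0. rscale (x a) (slice ?N 0 a)) = 0 \<longrightarrow> (\<forall>a<t 0. x a = 0)"
    by (rule indep_pts_fam[where w = "slice ?N 0" and p = "kappa d n t" and r = "t 0", OF upts])
  have uin: "\<forall>a<t 0. slice ?N 0 a \<in> TV.span (slice S' 0 ` {..<n 0})"
  proof -
    have "slice ?N 0 ` {..<t 0} \<subseteq> TV.span (slice S' 0 ` {..<n 0})"
    proof (rule span_contains)
      show "slice S' 0 ` {..<n 0} \<subseteq> TV.span (slice ?N 0 ` {..<t 0})" using sl_span by blast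
      show "finite (slice ?N 0 ` {..<t 0})" by simp
      show "TV.independent (slice ?N 0 ` {..<t 0})"
        by (rule indep_pts_set[where w = "slice ?N 0" and p = "kappa d n t" and r = "t 0", OF upts])
      show "TV.dim (slice S' 0 ` {..<n 0}) = card (slice ?N 0 ` {..<t 0})"
        using dimS' card_image[OF indep_pts_inj[where w = "slice ?N 0" and p = "kappa d n t" and r = "t 0", OF upts]] by simp
    qed
    then show ?thesis by auto
  qed
  obtain g0 where g0: "Defs.invertible_mat (n 0) g0"
    "\<forall>a<n 0. (\<Sum>b<n 0. rscale (g0 a b) (slice S' 0 b)) = (if a < t 0 then slice ?N 0 a else 0)"
    using reduce[OF dimS' uin uind] by blast
  have g0': "\<forall>a<n 0. (\<Sum>b<n 0. rscale (g0 a b) (slice S' 0 b)) = slice ?N 0 a"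
    using g0(2) u_zero[OF d1 nt t0] by (metis not_less)
  define g2 where "g2 (i::nat) = (if i = 0 then g0 else idm)" for i
  have g2GL: "g2 \<in> GL_prod d n" unfolding GL_prod_def g2_def using g0 invertible_idm by auto
  have main: "act d n g2 S' = ?N"
  proof
    fix k
    show "act d n g2 S' k = ?N k"
    proof (cases "k \<in> idx d n")
      case False then show ?thesis by (simp add: act_def normal_tensor_def)
    next
      case True
      have k0: "k 0 < n 0" using True d1 by (auto simp: idx_def)
      have kz: "k(0:=0) \<in> {l\<in>idx d n. l 0 = 0}" using True k0 by (auto simp: idx_def)
      have "act d n g2 S' k = (\<Sum>l\<in>{l\<in>idx d n. l 0 = 0}. (\<Prod>i\<in>{..<d}-{0}. g2 i (k i) (l i)) * (\<Sum>b<n 0. g2 0 (k 0) b * S' (l(0:=b))))"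
        using d1 by (intro act_K[OF _ True]) auto
      also have "\<dots> = (\<Sum>l\<in>{l\<in>idx d n. l 0 = 0}. if l = k(0:=0) then (\<Sum>b<n 0. g0 (k 0) b * S' (l(0:=b))) else 0)"
      proof (intro sum.cong refl)
        fix l assume l: "l \<in> {l\<in>idx d n. l 0 = 0}"
        have "(\<Prod>i\<in>{..<d}-{0}. g2 i (k i) (l i)) = (\<Prod>i\<in>{..<d}-{0}. idm (k i) (l i))"
          by (intro prod.cong) (auto simp: g2_def)
        also have "\<dots> = (if \<forall>i\<in>{..<d}-{0}. k i = l i then 1 else 0)" by (simp add: prod_idm)
        also have "(\<forall>i\<in>{..<d}-{0}. k i = l i) \<longleftrightarrow> l = k(0:=0)"
        proof
          assume A: "\<forall>i\<in>{..<d}-{0}. k i = l i"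
          show "l = k(0:=0)"
          proof
            fix i show "l i = (k(0:=0)) i"
              using A l True by (cases "i = 0"; cases "i < d") (auto simp: idx_def)
          qed
        qed auto
        finally show "(\<Prod>i\<in>{..<d}-{0}. g2 i (k i) (l i)) * (\<Sum>b<n 0. g2 0 (k 0) b * S' (l(0:=b))) =
            (if l = k(0:=0) then (\<Sum>b<n 0. g0 (k 0) b * S' (l(0:=b))) else 0)"
          by (simp add: g2_def)
      qed
      also have "\<dots> = (\<Sum>b<n 0. g0 (k 0) b * S' ((k(0:=0))(0:=b)))"
        using kz finite_idx by (simp add: sum.delta')
      also have "\<dots> = (\<Sum>b<n 0. rscale (g0 (k 0) b) (slice S' 0 b)) (k(0:=0))"
        by (simp add: sum_fun_apply rscale_apply slice_def)
      also have "\<dots> = slice ?N 0 (k 0) (k(0:=0))" using g0' k0 by simp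
      also have "\<dots> = ?N k" by (simp add: slice_def)
      finally show ?thesis .
    qed
  qed
  have "act d n (\<lambda>i. mmul (n i) (g2 i) (g1 i)) S = ?N"
    using main act_comp[OF St, of g2 g1] unfolding S'_def by simp
  moreover have GG: "(\<lambda>i. mmul (n i) (g2 i) (g1 i)) \<in> GL_prod d n" by (rule GL_mul[OF g2GL g1GL])
  obtain h where h: "h \<in> GL_prod d n" "\<forall>S\<in>tensors d n. act d n h (act d n (\<lambda>i. mmul (n i) (g2 i) (g1 i)) S) = S"
    using GL_inv[OF GG] by blast
  ultimately have "act d n h ?N = S" using St by metis
  then show ?thesis using h(1) by blast
qed

end




theorem mainTheorem7:
  fixes d :: nat and n t :: "nat \<Rightarrow> nat"
  assumes "d \<ge> 3"
    and "\<forall>i<d. n i \<ge> 2"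
    and "\<forall>i<d. 0 < t i \<and> t i \<le> n i"
    and "t 0 = (\<Prod>i\<in>{1..<d}. t i)"
  shows "(\<forall>S\<in>Lambda d n t. \<forall>S'\<in>Lambda d n t. \<exists>g\<in>GL_prod d n. act d n g S = S')
       \<and> Lambda d n t = (\<lambda>g. act d n g (normal_tensor d n t)) ` GL_prod d n"
proof -
  have d1: "1 \<le> d" using assms(1) by simp
  note nt = assms(3) and t0 = assms(4)
  let ?N = "normal_tensor d n t"
  have Nt: "?N \<in> tensors d n" by (rule N_tensor[OF d1 nt t0])
  have part2: "Lambda d n t = (\<lambda>g. act d n g ?N) ` GL_prod d n"
  proof
    show "Lambda d n t \<subseteq> (\<lambda>g. act d n g ?N) ` GL_prod d n"
      using orbit_main[OF d1 nt t0] by blast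
    show "(\<lambda>g. act d n g ?N) ` GL_prod d n \<subseteq> Lambda d n t"
      using act_Lambda N_Lambda[OF d1 nt t0] by blast
  qed
  have part1: "\<forall>S\<in>Lambda d n t. \<forall>S'\<in>Lambda d n t. \<exists>g\<in>GL_prod d n. act d n g S = S'"
  proof (intro ballI)
    fix S S' assume S: "S \<in> Lambda d n t" and S': "S' \<in> Lambda d n t"
    obtain g where g: "g \<in> GL_prod d n" "act d n g ?N = S" using orbit_main[OF d1 nt t0 S] by blast
    obtain g' where g': "g' \<in> GL_prod d n" "act d n g' ?N = S'" using orbit_main[OF d1 nt t0 S'] by blast
    obtain h where h: "h \<in> GL_prod d n" "\<forall>T\<in>tensors d n. act d n h (act d n g T) = T"
      using GL_inv[OF g(1)] by blast
    have hS: "act d n h S = ?N" using h(2) Nt g(2) by blast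
    have St: "S \<in> tensors d n" using S by (simp add: Lambda_def)
    have "act d n (\<lambda>i. mmul (n i) (g' i) (h i)) S = act d n g' (act d n h S)"
      using act_comp[OF St] by simp
    also have "\<dots> = S'" using hS g'(2) by simp
    finally show "\<exists>g\<in>GL_prod d n. act d n g S = S'" using GL_mul[OF g'(1) h(1)] by blast
  qed
  show ?thesis using part1 part2 by blast
qed


end
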